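(* Let $d \ge 2$. Let $\rho_T$ be a density matrix on $\mathbb{C}^2$ with eigenvalues, sorted in decreasing order, $\{\alpha, 1-\alpha\}$, and let $\rho_A$ be a density matrix on $\mathbb{C}^d$ with eigenvalues, sorted in decreasing order, $\{\beta_1, \beta_2, \dots, \beta_d\}$. Consider the joint state $\rho_{T,A} = \rho_T \otimes \rho_A$ on $\mathbb{C}^2 \otimes \mathbb{C}^d$ and, for a unitary $U$ on $\mathbb{C}^2\otimes\mathbb{C}^d$, the purification channel $\mathcal{E}_U(\rho_{T,A}) = \mathrm{Tr}_A\!\left(U \rho_{T,A} U^\dagger\right)$. Then among all unitaries $U$ on $\mathbb{C}^2\otimes\mathbb{C}^d$, a unitary maximizing the largest eigenvalue of the output target state $\mathcal{E}_U(\rho_{T,A})$ can always be chosen to be a permutation matrix with respect to a product eigenbasis $\{|a\rangle_T|b\rangle_A\}$ of $\rho_T\otimes\rho_A$ (where $\{|a\rangle_T\}$ and $\{|b\rangle_A\}$ are eigenbases of $\rho_T$ and $\rho_A$).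
   Context: $\mathrm{Tr}_A$ denotes the partial trace over the auxiliary system $\mathbb{C}^d$. The purity of the output target qubit is measured by its largest eigenvalue (equivalently by its polarization $\epsilon$, where a diagonal qubit state with eigenvalues $\frac{e^{\epsilon}}{e^\epsilon+e^{-\epsilon}}, \frac{e^{-\epsilon}}{e^\epsilon+e^{-\epsilon}}$ has polarization $\epsilon$); "optimal" means maximizing this purity. *)

theory Defs
  imports "Jordan_Normal_Form.Char_Poly" "HOL-Combinatorics.Permutations"
begin

definition adj :: "complex mat \<Rightarrow> complex mat" where
  "adj A = mat (dim_col A) (dim_row A) (\<lambda>(i,j). cnj (A $$ (j,i)))"

definition unitary_mat :: "nat \<Rightarrow> complex mat \<Rightarrow> bool" where
  "unitary_mat n U \<longleftrightarrow> U \<in> carrier_mat n n \<and> adj U * U = 1\<^sub>m n \<and> U * adj U = 1\<^sub>m n"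

definition density_mat :: "nat \<Rightarrow> complex mat \<Rightarrow> bool" where
  "density_mat n \<rho> \<longleftrightarrow> \<rho> \<in> carrier_mat n n \<and> adj \<rho> = \<rho> \<and>
     (\<forall>v \<in> carrier_vec n. 0 \<le> Re (\<Sum>i<n. cnj (v $ i) * (\<rho> *\<^sub>v v) $ i)) \<and>
     (\<Sum>i<n. \<rho> $$ (i,i)) = 1"

(* Kronecker product of an m x m and an n x n matrix; basis |a>|b> has index a*n+b *)
definition kron :: "complex mat \<Rightarrow> complex mat \<Rightarrow> complex mat" where
  "kron A B = mat (dim_row A * dim_row B) (dim_col A * dim_col B)
     (\<lambda>(i,j). A $$ (i div dim_row B, j div dim_col B) * B $$ (i mod dim_row B, j mod dim_col B))"

definition ptrace_A :: "nat \<Rightarrow> nat \<Rightarrow> complex mat \<Rightarrow> complex mat" where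
  "ptrace_A m d M = mat m m (\<lambda>(a,a'). \<Sum>b<d. M $$ (a*d+b, a'*d+b))"

definition purif_channel :: "nat \<Rightarrow> complex mat \<Rightarrow> complex mat \<Rightarrow> complex mat" where
  "purif_channel d U \<rho> = ptrace_A 2 d (U * \<rho> * adj U)"

(* largest eigenvalue (eigenvalues of Hermitian matrices are real) *)
definition lambda_max :: "complex mat \<Rightarrow> real" where
  "lambda_max M = Max {Re k | k. eigenvalue M k}"

(* columns of the unitary V form an orthonormal eigenbasis of rho *)
definition eigenbasis :: "nat \<Rightarrow> complex mat \<Rightarrow> complex mat \<Rightarrow> bool" where
  "eigenbasis n \<rho> V \<longleftrightarrow> unitary_mat n V \<and> diagonal_mat (adj V * \<rho> * V)"

definition perm_mat :: "nat \<Rightarrow> (nat \<Rightarrow> nat) \<Rightarrow> complex mat" where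
  "perm_mat n \<sigma> = mat n n (\<lambda>(i,j). if i = \<sigma> j then 1 else 0)"

(* permutation matrix w.r.t. the orthonormal basis given by the columns of W *)
definition perm_mat_wrt :: "complex mat \<Rightarrow> nat \<Rightarrow> (nat \<Rightarrow> nat) \<Rightarrow> complex mat" where
  "perm_mat_wrt W n \<sigma> = W * perm_mat n \<sigma> * adj W"

end

theory Submission
  imports Defs "Jordan_Normal_Form.Spectral_Radius"
begin


lemma mult_entry:
  assumes "A \<in> carrier_mat n m" "B \<in> carrier_mat m p" "i < n" "j < p"
  shows "(A * B) $$ (i,j) = (\<Sum>k<m. A $$ (i,k) * B $$ (k,j))"
  using assms by (auto simp: scalar_prod_def lessThan_atLeast0 intro!: sum.cong)

lemma adj_carrier[simp]: "A \<in> carrier_mat n m \<Longrightarrow> adj A \<in> carrier_mat m n"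
  by (auto simp: adj_def)

lemma adj_dims[simp]: "dim_row (adj A) = dim_col A" "dim_col (adj A) = dim_row A"
  by (auto simp: adj_def)

lemma adj_entry[simp]: "i < dim_col A \<Longrightarrow> j < dim_row A \<Longrightarrow> adj A $$ (i,j) = cnj (A $$ (j,i))"
  by (auto simp: adj_def)

lemma adj_adj[simp]: "adj (adj A) = A"
  by (rule eq_matI, auto)

lemma adj_one[simp]: "adj (1\<^sub>m n) = 1\<^sub>m n"
  by (rule eq_matI, auto)

lemma adj_mult:
  assumes "A \<in> carrier_mat n m" "B \<in> carrier_mat m p"
  shows "adj (A * B) = adj B * adj A"
proof (rule eq_matI)
  fix i j assume ij: "i < dim_row (adj B * adj A)" "j < dim_col (adj B * adj A)"
  hence i: "i < p" and j: "j < n" using assms by auto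
  have "adj (A * B) $$ (i,j) = cnj ((A*B) $$ (j,i))" using assms i j by simp
  also have "\<dots> = (\<Sum>k<m. cnj (A $$ (j,k)) * cnj (B $$ (k,i)))"
    by (subst mult_entry[OF assms j i], simp)
  also have "\<dots> = (adj B * adj A) $$ (i,j)"
    using assms i j by (subst mult_entry[of _ p m _ n], auto intro!: sum.cong)
  finally show "adj (A * B) $$ (i,j) = (adj B * adj A) $$ (i,j)" .
qed (use assms in auto)

lemma sq_mult_carrier[simp]: "A \<in> carrier_mat n n \<Longrightarrow> B \<in> carrier_mat n n \<Longrightarrow> A * B \<in> carrier_mat n n"
  by auto

lemma assoc3: "A \<in> carrier_mat n n \<Longrightarrow> B \<in> carrier_mat n n \<Longrightarrow> C \<in> carrier_mat n n \<Longrightarrow> A * B * C = A * (B * C)"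
  using assoc_mult_mat by blast

lemma unitary_carrier: "unitary_mat n U \<Longrightarrow> U \<in> carrier_mat n n"
  by (simp add: unitary_mat_def)

lemma unitary_mult:
  assumes "unitary_mat n A" "unitary_mat n B"
  shows "unitary_mat n (A * B)"
proof -
  have A: "A \<in> carrier_mat n n" and B: "B \<in> carrier_mat n n"
    and a1: "adj A * A = 1\<^sub>m n" and a2: "A * adj A = 1\<^sub>m n"
    and b1: "adj B * B = 1\<^sub>m n" and b2: "B * adj B = 1\<^sub>m n"
    using assms by (auto simp: unitary_mat_def)
  have aA: "adj A \<in> carrier_mat n n" and aB: "adj B \<in> carrier_mat n n" using A B by auto
  have "adj (A * B) * (A * B) = adj B * (adj A * A) * B"
    unfolding adj_mult[OF A B] using A B aA aB 
    by (subst assoc3[of _ n], auto)+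
  also have "\<dots> = 1\<^sub>m n" using a1 b1 B aB by simp
  finally have 1: "adj (A * B) * (A * B) = 1\<^sub>m n" .
  have "(A * B) * adj (A * B) = A * (B * adj B) * adj A"
    unfolding adj_mult[OF A B] using A B aA aB 
    by (subst assoc3[of _ n], auto)+
  also have "\<dots> = 1\<^sub>m n" using a2 b2 A aA by simp
  finally show ?thesis using 1 A B unfolding unitary_mat_def by auto
qed



lemma sum_delta_l: "i < (m::nat) \<Longrightarrow> (\<Sum>k<m. (if i = k then 1 else 0) * (f k :: complex)) = f i"
proof -
  assume "i < m"
  have "(\<Sum>k<m. (if i = k then 1 else 0) * (f k :: complex)) = (\<Sum>k<m. if i = k then f k else 0)"
    by (rule sum.cong, auto)
  thus ?thesis using \<open>i < m\<close> by (subst (asm) sum.delta', auto)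
qed

lemma sum_delta_r: "j < (m::nat) \<Longrightarrow> (\<Sum>k<m. (f k :: complex) * (if k = j then 1 else 0)) = f j"
proof -
  assume "j < m"
  have "(\<Sum>k<m. (f k :: complex) * (if k = j then 1 else 0)) = (\<Sum>k<m. if k = j then f k else 0)"
    by (rule sum.cong, auto)
  thus ?thesis using \<open>j < m\<close> by (subst (asm) sum.delta, auto)
qed

lemma sum_delta0: "0 < (m::nat) \<Longrightarrow> (\<Sum>k<m. (if k = 0 then 1 else 0) * (f k :: complex)) = f 0"
  using sum_delta_l[of 0 m f] by (simp add: eq_commute[of 0])

lemma cnj_sq_sum_real: "(\<Sum>k\<in>A. (u k :: complex) * cnj (u k)) = complex_of_real (\<Sum>k\<in>A. cmod (u k) ^ 2)"
  unfolding of_real_sum by (rule sum.cong, simp, metis complex_norm_square)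

lemma householder_unit:
  fixes v :: "complex vec"
  assumes v: "v \<in> carrier_vec m" and m: "m > 0" and nv: "(\<Sum>i<m. v$i * cnj (v$i)) = 1"
  shows "\<exists>W c. unitary_mat m W \<and> c \<noteq> 0 \<and> (\<forall>i<m. W $$ (i,0) = c * v$i)"
proof -
  define r where "r = cmod (v$0)"
  define \<phi> where "\<phi> = (if v$0 = 0 then 1 else v$0 / complex_of_real r)"
  have phi1: "\<phi> * cnj \<phi> = 1"
  proof (cases "v$0 = 0")
    case False
    hence "r \<noteq> 0" by (simp add: r_def)
    thus ?thesis using False unfolding \<phi>_def r_def 
      by (simp add: complex_norm_square[symmetric] field_simps power2_eq_square)
  qed (simp add: \<phi>_def)
  have phiv: "v$0 = \<phi> * complex_of_real r"
    by (cases "v$0 = 0", auto simp: \<phi>_def r_def)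
  define u where "u = (\<lambda>i. v$i - (if i = 0 then \<phi> else 0))"
  define N where "N = (\<Sum>k<m. u k * cnj (u k))"
  define \<alpha> where "\<alpha> = 2 / N"
  define W where "W = mat m m (\<lambda>(i,j). (if i = j then 1 else 0) - \<alpha> * u i * cnj (u j))"
  have cN: "cnj N = N" unfolding N_def by (simp add: mult.commute)
  have ca: "cnj \<alpha> = \<alpha>" unfolding \<alpha>_def using cN by simp
  have aN: "\<alpha> * \<alpha> * N = 2 * \<alpha>"
    by (cases "N = 0", auto simp: \<alpha>_def)
  have Wc: "W \<in> carrier_mat m m" unfolding W_def by simp
  have Wadj: "adj W = W"
    by (rule eq_matI, auto simp: W_def ca)
  have WW: "W * W = 1\<^sub>m m"
  proof (rule eq_matI)
    fix i j assume "i < dim_row (1\<^sub>m m)" "j < dim_col (1\<^sub>m m)"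
    hence i: "i < m" and j: "j < m" by auto
    have "(W * W) $$ (i,j) = (\<Sum>k<m. ((if i = k then 1 else 0) - \<alpha> * u i * cnj (u k)) *
        ((if k = j then 1 else 0) - \<alpha> * u k * cnj (u j)))"
      by (subst mult_entry[OF Wc Wc i j], simp add: W_def i j)
    also have "\<dots> = (\<Sum>k<m. (if i = k then 1 else 0) * (if k = j then 1 else 0))
        - (\<Sum>k<m. (if i = k then 1 else 0) * (\<alpha> * u k * cnj (u j)))
        - (\<Sum>k<m. (\<alpha> * u i * cnj (u k)) * (if k = j then 1 else 0))
        + (\<alpha> * \<alpha> * u i * cnj (u j)) * N"
      unfolding N_def sum_distrib_left sum_subtractf[symmetric] sum.distrib[symmetric]
      by (rule sum.cong, simp, simp add: algebra_simps)
    also have "\<dots> = (if i = j then 1 else 0) - \<alpha> * u i * cnj (u j) - \<alpha> * u i * cnj (u j)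
        + (\<alpha> * \<alpha> * N) * u i * cnj (u j)"
      by (simp only: sum_delta_l[OF i] sum_delta_r[OF j], simp add: algebra_simps)
    also have "\<dots> = (if i = j then 1 else 0)" unfolding aN by (simp add: algebra_simps)
    finally show "(W * W) $$ (i,j) = 1\<^sub>m m $$ (i,j)" using i j by simp
  qed (use Wc in auto)
  have unit: "unitary_mat m W" unfolding unitary_mat_def Wadj WW using Wc by simp
  have col: "W $$ (i,0) = cnj \<phi> * v$i" if i: "i < m" for i
  proof (cases "N = 0")
    case True
    hence "(\<Sum>k<m. cmod (u k) ^ 2) = 0" unfolding N_def cnj_sq_sum_real of_real_eq_0_iff .
    hence "\<forall>k\<in>{..<m}. cmod (u k) ^ 2 = 0" by (subst sum_nonneg_eq_0_iff[symmetric], auto)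
    hence "u i = 0" using i by auto
    hence "v$i = (if i = 0 then \<phi> else 0)" unfolding u_def by (auto split: if_splits)
    thus ?thesis using i m True phi1 by (simp add: W_def \<alpha>_def mult.commute)
  next
    case False
    have "N = (\<Sum>k<m. v$k * cnj (v$k)) - (\<Sum>k<m. (if k = 0 then 1 else 0) * (v$k * cnj \<phi>))
       - (\<Sum>k<m. (if k = 0 then 1 else 0) * (\<phi> * cnj (v$k)))
       + (\<Sum>k<m. (if k = 0 then 1 else 0) * (\<phi> * cnj \<phi>))"
      unfolding N_def sum_subtractf[symmetric] sum.distrib[symmetric]
      by (rule sum.cong, simp, simp add: u_def algebra_simps)
    also have "\<dots> = 2 - 2 * complex_of_real r"
      using m unfolding nv
      by (simp only: sum_delta0, subst (2) phiv, subst phiv, simp add: algebra_simps phi1)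
    finally have N2: "N = 2 - 2 * complex_of_real r" .
    have cu0: "cnj (u 0) = cnj \<phi> * (complex_of_real r - 1)"
      unfolding u_def by (subst phiv, simp add: algebra_simps)
    have "\<alpha> * u i * cnj (u 0) = - u i * cnj \<phi>"
    proof -
      have nz: "2 - 2 * complex_of_real r \<noteq> 0" using False N2 by simp
      have "\<alpha> * u i * cnj (u 0) = (2 * (complex_of_real r - 1) / (2 - 2 * complex_of_real r)) * (u i * cnj \<phi>)"
        unfolding cu0 \<alpha>_def N2 by (simp add: algebra_simps)
      also have "2 * (complex_of_real r - 1) / (2 - 2 * complex_of_real r) = -1"
        using nz by (simp add: field_simps)
      finally show ?thesis by simp
    qed
    hence "W $$ (i,0) = (if i = 0 then 1 else 0) + u i * cnj \<phi>"
      using i m by (simp add: W_def)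
    also have "\<dots> = cnj \<phi> * v$i" unfolding u_def using phi1 by (auto simp: algebra_simps)
    finally show ?thesis .
  qed
  have "cnj \<phi> \<noteq> 0" using phi1 by auto
  thus ?thesis using unit col by blast
qed



declare sum.lessThan_Suc[simp del]

lemma householder:
  fixes v :: "complex vec"
  assumes v: "v \<in> carrier_vec m" and v0: "v \<noteq> 0\<^sub>v m"
  shows "\<exists>W c. unitary_mat m W \<and> c \<noteq> 0 \<and> (\<forall>i<m. W $$ (i,0) = c * v$i)"
proof -
  have "\<exists>i<m. v$i \<noteq> 0"
  proof (rule ccontr)
    assume "\<not> ?thesis"
    hence "\<forall>i<m. v$i = 0" by auto
    hence "v = 0\<^sub>v m" using v by (intro eq_vecI, auto)
    thus False using v0 by simp
  qed
  then obtain i where i: "i < m" "v$i \<noteq> 0" by blast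
  define s where "s = (\<Sum>k<m. cmod (v$k) ^ 2)"
  have s: "s > 0" unfolding s_def
    by (rule sum_pos2[of _ i], use i in auto)
  define w where "w = (1 / complex_of_real (sqrt s)) \<cdot>\<^sub>v v"
  have wc: "w \<in> carrier_vec m" using v by (simp add: w_def)
  have sq: "(complex_of_real (sqrt s))^2 = complex_of_real s"
    using s by (simp add: of_real_power[symmetric] del: of_real_power)
  have "(\<Sum>k<m. w$k * cnj (w$k)) = (\<Sum>k<m. (1 / complex_of_real s) * (v$k * cnj (v$k)))"
    using v s sq by (intro sum.cong, auto simp: w_def power2_eq_square[symmetric])
  also have "\<dots> = (1 / complex_of_real s) * complex_of_real s"
    unfolding sum_distrib_left[symmetric] cnj_sq_sum_real s_def by simp
  also have "\<dots> = 1" using s by simp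
  finally have nw: "(\<Sum>k<m. w$k * cnj (w$k)) = 1" .
  have m: "m > 0" using i by simp
  from householder_unit[OF wc m nw] obtain W c where
    W: "unitary_mat m W" "c \<noteq> 0" "\<forall>i<m. W $$ (i,0) = c * w$i" by blast
  show ?thesis
  proof (intro exI conjI)
    show "unitary_mat m W" by fact
    show "c / complex_of_real (sqrt s) \<noteq> 0" using W(2) s by simp
    show "\<forall>i<m. W $$ (i,0) = c / complex_of_real (sqrt s) * v$i"
      using W(3) v by (auto simp: w_def)
  qed
qed

lemma unitaryD: assumes "unitary_mat n U"
  shows "U \<in> carrier_mat n n" "adj U \<in> carrier_mat n n" "adj U * U = 1\<^sub>m n" "U * adj U = 1\<^sub>m n"
  using assms by (auto simp: unitary_mat_def)

lemma adj_sandwich: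
  assumes "W \<in> carrier_mat n n" "A \<in> carrier_mat n n"
  shows "adj (adj W * A * W) = adj W * adj A * W"
proof -
  have "adj (adj W * A * W) = adj W * adj (adj W * A)"
    using assms by (subst adj_mult[of _ n n _ n], auto)
  also have "\<dots> = adj W * (adj A * W)"
    using assms by (subst adj_mult[of _ n n _ n], auto)
  also have "\<dots> = adj W * adj A * W" using assms by (simp add: assoc3[of _ n])
  finally show ?thesis .
qed

definition blk :: "complex \<Rightarrow> complex mat \<Rightarrow> complex mat" where
  "blk c A = mat (Suc (dim_row A)) (Suc (dim_col A)) (\<lambda>(i,j). if i = 0 then (if j = 0 then c else 0)
     else if j = 0 then 0 else A $$ (i - 1, j - 1))"

lemma blk_carrier[simp]: "A \<in> carrier_mat n m \<Longrightarrow> blk c A \<in> carrier_mat (Suc n) (Suc m)"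
  by (auto simp: blk_def)

lemma blk_dims[simp]: "dim_row (blk c A) = Suc (dim_row A)" "dim_col (blk c A) = Suc (dim_col A)"
  by (auto simp: blk_def)

lemma blk_00[simp]: "blk c A $$ (0,0) = c" by (simp add: blk_def)
lemma blk_0j[simp]: "j < dim_col A \<Longrightarrow> blk c A $$ (0, Suc j) = 0" by (simp add: blk_def)
lemma blk_i0[simp]: "i < dim_row A \<Longrightarrow> blk c A $$ (Suc i, 0) = 0" by (simp add: blk_def)
lemma blk_ij[simp]: "i < dim_row A \<Longrightarrow> j < dim_col A \<Longrightarrow> blk c A $$ (Suc i, Suc j) = A $$ (i,j)"
  by (simp add: blk_def)

lemma blk_cases: assumes "i < Suc n" obtains "i = 0" | i' where "i = Suc i'" "i' < n"
  using assms by (cases i, auto)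

lemma blk_mult:
  assumes A: "A \<in> carrier_mat n m" and B: "B \<in> carrier_mat m p"
  shows "blk a A * blk b B = blk (a * b) (A * B)"
proof (rule eq_matI)
  fix i j assume "i < dim_row (blk (a * b) (A * B))" "j < dim_col (blk (a * b) (A * B))"
  hence i: "i < Suc n" and j: "j < Suc p" using A B by auto
  have e: "(blk a A * blk b B) $$ (i,j) = blk a A $$ (i,0) * blk b B $$ (0,j) +
     (\<Sum>k<m. blk a A $$ (i, Suc k) * blk b B $$ (Suc k, j))"
    by (subst mult_entry[of _ "Suc n" "Suc m" _ "Suc p"], use A B i j in \<open>auto simp: sum.lessThan_Suc_shift\<close>)
  show "(blk a A * blk b B) $$ (i,j) = blk (a * b) (A * B) $$ (i,j)"
  proof (cases rule: blk_cases[OF i])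
    case 1
    then show ?thesis
    proof (cases rule: blk_cases[OF j])
      case 1 thus ?thesis using \<open>i = 0\<close> e A B by simp
    next
      case (2 j') thus ?thesis using \<open>i = 0\<close> e A B by simp
    qed
  next
    case (2 i')
    then show ?thesis
    proof (cases rule: blk_cases[OF j])
      case 1 thus ?thesis using 2 e A B by simp
    next
      case (2 j')
      have "blk (a*b) (A*B) $$ (Suc i', Suc j') = (A*B) $$ (i',j')"
        by (rule blk_ij, use A B \<open>i' < n\<close> 2 in auto)
      also have "\<dots> = (\<Sum>k<m. A $$ (i', k) * B $$ (k, j'))"
        by (rule mult_entry[OF A B \<open>i' < n\<close> \<open>j' < p\<close>])
      finally show ?thesis using \<open>i = Suc i'\<close> \<open>i' < n\<close> 2 e A B by simp
    qed
  qed
qed (use A B in auto)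

lemma adj_blk: "adj (blk c A) = blk (cnj c) (adj A)"
proof (rule eq_matI)
  fix i j assume "i < dim_row (blk (cnj c) (adj A))" "j < dim_col (blk (cnj c) (adj A))"
  hence i: "i < Suc (dim_col A)" and j: "j < Suc (dim_row A)" by auto
  show "adj (blk c A) $$ (i, j) = blk (cnj c) (adj A) $$ (i, j)"
    using i j by (cases i; cases j, auto)
qed auto

lemma blk_one: "blk 1 (1\<^sub>m n) = 1\<^sub>m (Suc n)"
proof (rule eq_matI)
  fix i j assume "i < dim_row (1\<^sub>m (Suc n))" "j < dim_col (1\<^sub>m (Suc n))"
  hence i: "i < Suc n" and j: "j < Suc n" by auto
  show "blk 1 (1\<^sub>m n) $$ (i, j) = 1\<^sub>m (Suc n) $$ (i, j)"
    using i j by (cases i; cases j, auto)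
qed auto

lemma blk_diag: "diagonal_mat A \<Longrightarrow> diagonal_mat (blk c A)"
  unfolding diagonal_mat_def
proof (intro allI impI)
  fix i j assume d: "\<forall>i<dim_row A. \<forall>j<dim_col A. i \<noteq> j \<longrightarrow> A $$ (i, j) = 0"
    and i: "i < dim_row (blk c A)" and j: "j < dim_col (blk c A)" and ij: "i \<noteq> j"
  show "blk c A $$ (i, j) = 0" using d i j ij by (cases i; cases j, auto)
qed

lemma blk_unitary: "unitary_mat n U \<Longrightarrow> unitary_mat (Suc n) (blk 1 U)"
  unfolding unitary_mat_def adj_blk
  by (auto simp: blk_mult[of _ n n _ n] blk_one)

lemma spectral:
  fixes A :: "complex mat"
  assumes "A \<in> carrier_mat n n" "adj A = A"
  shows "\<exists>U. unitary_mat n U \<and> diagonal_mat (adj U * A * U)"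
  using assms
proof (induction n arbitrary: A)
  case 0
  have "unitary_mat 0 (1\<^sub>m 0)" unfolding unitary_mat_def by simp
  moreover have "diagonal_mat (adj (1\<^sub>m 0) * A * 1\<^sub>m 0)" using 0 by (simp add: diagonal_mat_def)
  ultimately show ?case by blast
next
  case (Suc n)
  note A = Suc.prems(1) and hA = Suc.prems(2)
  let ?N = "Suc n"
  obtain \<mu> where "eigenvalue A \<mu>" using spectrum_non_empty[OF A] by (auto simp: spectrum_def)
  then obtain v where v: "v \<in> carrier_vec ?N" "v \<noteq> 0\<^sub>v ?N" "A *\<^sub>v v = \<mu> \<cdot>\<^sub>v v"
    using A unfolding eigenvalue_def eigenvector_def by auto
  obtain W c where W: "unitary_mat ?N W" "c \<noteq> 0" "\<forall>i<?N. W $$ (i,0) = c * v$i"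
    using householder[OF v(1,2)] by blast
  note Wd = unitaryD[OF W(1)]
  define C where "C = adj W * A * W"
  have Cc: "C \<in> carrier_mat ?N ?N" unfolding C_def using Wd A by simp
  have hC: "adj C = C" unfolding C_def using Wd A hA
    by (simp add: adj_sandwich[of _ ?N])
  have AW0: "(A * W) $$ (k,0) = \<mu> * W $$ (k,0)" if k: "k < ?N" for k
  proof -
    have "(A * W) $$ (k,0) = (\<Sum>l<?N. A $$ (k,l) * (c * v$l))"
      using k W(3) by (subst mult_entry[OF A Wd(1)], auto)
    also have "\<dots> = c * (\<Sum>l<?N. A $$ (k,l) * v$l)"
      unfolding sum_distrib_left by (rule sum.cong, auto simp: algebra_simps)
    also have "\<dots> = c * (A *\<^sub>v v) $ k"
      using k A v(1) by (simp add: scalar_prod_def lessThan_atLeast0 del: sum.op_ivl_Suc)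
    also have "\<dots> = \<mu> * W $$ (k,0)" using v k W(3) by simp
    finally show ?thesis .
  qed
  have C0: "C $$ (i,0) = (if i = 0 then \<mu> else 0)" if i: "i < ?N" for i
  proof -
    have "C $$ (i,0) = (adj W * (A * W)) $$ (i,0)"
      unfolding C_def using Wd A by (simp add: assoc3[of _ ?N])
    also have "\<dots> = (\<Sum>k<?N. adj W $$ (i,k) * (\<mu> * W $$ (k,0)))"
      using i AW0 by (subst mult_entry[OF Wd(2), of _ ?N], use Wd A in auto)
    also have "\<dots> = \<mu> * (adj W * W) $$ (i,0)"
      using i by (subst mult_entry[OF Wd(2) Wd(1)], auto simp: sum_distrib_left intro!: sum.cong)
    also have "\<dots> = (if i = 0 then \<mu> else 0)" using i Wd(3) by simp
    finally show ?thesis .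
  qed
  have C0': "C $$ (0,j) = (if j = 0 then \<mu> else 0)" if j: "j < ?N" for j
  proof -
    have "C $$ (0,j) = adj C $$ (0,j)" using hC by simp
    also have "\<dots> = cnj (C $$ (j,0))" using Cc j by simp
    finally show ?thesis using C0[OF j] C0[of 0] hC by (cases "j = 0", auto)
  qed
  define C3 where "C3 = mat n n (\<lambda>(i,j). C $$ (Suc i, Suc j))"
  have C3c: "C3 \<in> carrier_mat n n" unfolding C3_def by simp
  have hC3: "adj C3 = C3"
  proof (rule eq_matI)
    fix i j assume "i < dim_row C3" "j < dim_col C3"
    hence ij: "i < n" "j < n" unfolding C3_def by auto
    have "adj C3 $$ (i,j) = cnj (C $$ (Suc j, Suc i))" using ij by (simp add: C3_def)
    also have "\<dots> = adj C $$ (Suc i, Suc j)" using ij Cc by simp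
    finally show "adj C3 $$ (i,j) = C3 $$ (i,j)" using hC ij by (simp add: C3_def)
  qed (auto simp: C3_def)
  obtain U3 where U3: "unitary_mat n U3" "diagonal_mat (adj U3 * C3 * U3)"
    using Suc.IH[OF C3c hC3] by blast
  note U3d = unitaryD[OF U3(1)]
  have C: "C = blk \<mu> C3"
  proof (rule eq_matI)
    fix i j assume "i < dim_row (blk \<mu> C3)" "j < dim_col (blk \<mu> C3)"
    hence i: "i < ?N" and j: "j < ?N" using C3c by auto
    show "C $$ (i,j) = blk \<mu> C3 $$ (i,j)"
    proof (cases rule: blk_cases[OF i])
      case 1 thus ?thesis using C0' j C3c by (cases j, auto)
    next
      case (2 i') thus ?thesis using C0 i j C3c by (cases j, auto simp: C3_def)
    qed
  qed (use Cc C3c in auto)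
  define E where "E = blk 1 U3"
  have E_unit: "unitary_mat ?N E" unfolding E_def by (rule blk_unitary[OF U3(1)])
  note Ed = unitaryD[OF E_unit]
  have eq: "adj (W * E) * A * (W * E) = adj E * C * E"
    unfolding C_def using Ed Wd A
    by (simp add: adj_mult[of _ ?N ?N] assoc3[of _ ?N])
  also have "\<dots> = blk \<mu> (adj U3 * C3 * U3)"
    unfolding E_def C adj_blk using U3d C3c by (simp add: blk_mult[of _ n n _ n])
  finally have "diagonal_mat (adj (W * E) * A * (W * E))" using blk_diag[OF U3(2)] by simp
  thus ?case using unitary_mult[OF W(1) E_unit] by blast
qed



lemma sum_prod_index:
  "(\<Sum>k<m*n. f k) = (\<Sum>a<m. \<Sum>b<n. f (a*n+b))" for m n :: nat
proof (induction m)
  case 0 then show ?case by simp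
next
  case (Suc m)
  have "(\<Sum>k<Suc m * n. f k) = (\<Sum>k<m*n. f k) + (\<Sum>k\<in>{m*n..<m*n+n}. f k)"
    by (simp add: sum.atLeastLessThan_concat[symmetric] lessThan_atLeast0 add.commute)
  also have "(\<Sum>k\<in>{m*n..<m*n+n}. f k) = (\<Sum>b<n. f (m*n+b))"
    by (simp add: lessThan_atLeast0 sum.shift_bounds_nat_ivl[symmetric] add.commute)
  finally show ?case using Suc by (simp add: sum.lessThan_Suc)
qed

lemma idx_lt: "a < m \<Longrightarrow> b < n \<Longrightarrow> a * n + b < m * (n::nat)"
proof -
  assume a: "a < m" and b: "b < n"
  have "a * n + b < a * n + n" using b by simp
  also have "\<dots> = Suc a * n" by simp
  also have "\<dots> \<le> m * n" using a by (intro mult_le_mono1) simp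
  finally show ?thesis .
qed

lemma kron_carrier[simp]: "A \<in> carrier_mat m m' \<Longrightarrow> B \<in> carrier_mat n n' \<Longrightarrow> kron A B \<in> carrier_mat (m*n) (m'*n')"
  by (auto simp: kron_def)

lemma kron_dims[simp]: "dim_row (kron A B) = dim_row A * dim_row B" "dim_col (kron A B) = dim_col A * dim_col B"
  by (auto simp: kron_def)

lemma kron_entry: "i < dim_row A * dim_row B \<Longrightarrow> j < dim_col A * dim_col B \<Longrightarrow>
  kron A B $$ (i,j) = A $$ (i div dim_row B, j div dim_col B) * B $$ (i mod dim_row B, j mod dim_col B)"
  by (auto simp: kron_def)

lemma div_lt_of_lt_mult: "i < m * (n::nat) \<Longrightarrow> i div n < m"
  by (simp add: less_mult_imp_div_less)

lemma mod_lt_of_lt_mult: "i < m * (n::nat) \<Longrightarrow> i mod n < n"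
  by (cases "n = 0", auto)

lemma adj_kron: "adj (kron A B) = kron (adj A) (adj B)"
  by (rule eq_matI, auto simp: kron_entry div_lt_of_lt_mult mod_lt_of_lt_mult)

lemma kron_mult:
  assumes A: "A \<in> carrier_mat m m" and B: "B \<in> carrier_mat n n"
    and C: "C \<in> carrier_mat m m" and D: "D \<in> carrier_mat n n"
  shows "kron A B * kron C D = kron (A * C) (B * D)"
proof (rule eq_matI)
  fix i j assume "i < dim_row (kron (A * C) (B * D))" "j < dim_col (kron (A * C) (B * D))"
  hence i: "i < m * n" and j: "j < m * n" using A B C D by auto
  have id: "i div n < m" "j div n < m" "i mod n < n" "j mod n < n"
    using i j by (auto simp: div_lt_of_lt_mult mod_lt_of_lt_mult)
  have "(kron A B * kron C D) $$ (i,j) = (\<Sum>k<m*n. kron A B $$ (i,k) * kron C D $$ (k,j))"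
    by (rule mult_entry[of _ "m*n" "m*n" _ "m*n"], use A B C D i j in auto)
  also have "\<dots> = (\<Sum>a<m. \<Sum>b<n. kron A B $$ (i,a*n+b) * kron C D $$ (a*n+b,j))"
    by (rule sum_prod_index)
  also have "\<dots> = (\<Sum>a<m. \<Sum>b<n. (A $$ (i div n, a) * C $$ (a, j div n)) * (B $$ (i mod n, b) * D $$ (b, j mod n)))"
  proof (intro sum.cong refl)
    fix a b assume a: "a \<in> {..<m}" and b: "b \<in> {..<n}"
    have k: "a * n + b < m * n" using a b
      by (simp add: idx_lt)
    have "(a * n + b) div n = a" "(a * n + b) mod n = b" using b by auto
    thus "kron A B $$ (i,a*n+b) * kron C D $$ (a*n+b,j) =
        (A $$ (i div n, a) * C $$ (a, j div n)) * (B $$ (i mod n, b) * D $$ (b, j mod n))"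
      using A B C D i j k by (simp add: kron_entry algebra_simps)
  qed
  also have "\<dots> = (\<Sum>a<m. A $$ (i div n, a) * C $$ (a, j div n)) * (\<Sum>b<n. B $$ (i mod n, b) * D $$ (b, j mod n))"
    by (simp add: sum_product)
  also have "\<dots> = (A * C) $$ (i div n, j div n) * (B * D) $$ (i mod n, j mod n)"
    using id by (simp add: mult_entry[OF A C] mult_entry[OF B D])
  also have "\<dots> = kron (A * C) (B * D) $$ (i,j)"
    using A B C D i j by (simp add: kron_entry)
  finally show "(kron A B * kron C D) $$ (i,j) = kron (A * C) (B * D) $$ (i,j)" .
qed (use A B C D in auto)

lemma kron_one: "kron (1\<^sub>m m) (1\<^sub>m n) = 1\<^sub>m (m * n)"
proof (rule eq_matI)
  fix i j assume "i < dim_row (1\<^sub>m (m * n))" "j < dim_col (1\<^sub>m (m * n))"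
  hence i: "i < m * n" and j: "j < m * n" by auto
  have "(i div n = j div n \<and> i mod n = j mod n) = (i = j)"
    by (metis div_mult_mod_eq)
  thus "kron (1\<^sub>m m) (1\<^sub>m n) $$ (i, j) = 1\<^sub>m (m * n) $$ (i, j)"
    using i j by (auto simp: kron_entry div_lt_of_lt_mult mod_lt_of_lt_mult)
qed auto

lemma kron_diag:
  assumes A: "A \<in> carrier_mat m m" and B: "B \<in> carrier_mat n n"
    and dA: "diagonal_mat A" and dB: "diagonal_mat B"
  shows "diagonal_mat (kron A B)"
  unfolding diagonal_mat_def
proof (intro allI impI)
  fix i j assume i: "i < dim_row (kron A B)" and j: "j < dim_col (kron A B)" and ij: "i \<noteq> j"
  hence i': "i < m * n" and j': "j < m * n" using A B by auto
  have "i div n \<noteq> j div n \<or> i mod n \<noteq> j mod n"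
    using ij by (metis div_mult_mod_eq)
  thus "kron A B $$ (i, j) = 0"
    using dA dB A B i' j' unfolding diagonal_mat_def
    by (auto simp: kron_entry div_lt_of_lt_mult mod_lt_of_lt_mult)
qed

lemma kron_unitary:
  assumes "unitary_mat m A" "unitary_mat n B"
  shows "unitary_mat (m * n) (kron A B)"
  using assms unfolding unitary_mat_def
  by (auto simp: adj_kron kron_mult[of _ m _ n] kron_one)



lemma kyfan:
  fixes lam c :: "nat \<Rightarrow> real"
  assumes fin: "finite I" and S: "S \<subseteq> I" "S \<noteq> {}"
    and c: "\<forall>i\<in>I. 0 \<le> c i \<and> c i \<le> N"
    and sc: "(\<Sum>i\<in>I. c i) = real (card S) * N"
    and thr: "\<forall>i\<in>S. \<forall>j\<in>I-S. lam j \<le> lam i"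
  shows "(\<Sum>i\<in>I. lam i * c i) \<le> N * (\<Sum>i\<in>S. lam i)"
proof -
  have finS: "finite S" using fin S finite_subset by blast
  define t where "t = Min (lam ` S)"
  have tS: "\<forall>i\<in>S. t \<le> lam i" unfolding t_def using finS by auto
  have "t \<in> lam ` S" unfolding t_def using finS S(2) by (intro Min_in, auto)
  then obtain i0 where i0: "i0 \<in> S" "t = lam i0" by auto
  have tI: "\<forall>j\<in>I-S. lam j \<le> t" using thr i0 by auto
  have 1: "(\<Sum>i\<in>S. lam i * (c i - N)) \<le> (\<Sum>i\<in>S. t * (c i - N))"
  proof (rule sum_mono)
    fix i assume i: "i \<in> S"
    have "c i - N \<le> 0" using c i S by auto
    thus "lam i * (c i - N) \<le> t * (c i - N)" using tS i by (simp add: mult_right_mono_neg)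
  qed
  have 2: "(\<Sum>i\<in>I-S. lam i * c i) \<le> (\<Sum>i\<in>I-S. t * c i)"
  proof (rule sum_mono)
    fix i assume i: "i \<in> I - S"
    thus "lam i * c i \<le> t * c i" using tI c by (simp add: mult_right_mono)
  qed
  have "(\<Sum>i\<in>I. c i) = (\<Sum>i\<in>S. c i) + (\<Sum>i\<in>I-S. c i)"
    using sum.subset_diff[OF S(1) fin] by (simp add: add.commute)
  hence eq: "(\<Sum>i\<in>S. c i) + (\<Sum>i\<in>I-S. c i) = real (card S) * N" using sc by simp
  have "(\<Sum>i\<in>S. t * (c i - N)) + (\<Sum>i\<in>I-S. t * c i) = t * ((\<Sum>i\<in>S. c i) + (\<Sum>i\<in>I-S. c i)) - t * (real (card S) * N)"
    by (simp add: sum_distrib_left[symmetric] sum_subtractf algebra_simps)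
  hence 3: "(\<Sum>i\<in>S. t * (c i - N)) + (\<Sum>i\<in>I-S. t * c i) = 0" unfolding eq by simp
  have 4: "(\<Sum>i\<in>I. lam i * c i) = (\<Sum>i\<in>S. lam i * c i) + (\<Sum>i\<in>I-S. lam i * c i)"
    using sum.subset_diff[OF S(1) fin] by (simp add: add.commute)
  have 5: "(\<Sum>i\<in>S. lam i * (c i - N)) = (\<Sum>i\<in>S. lam i * c i) - N * (\<Sum>i\<in>S. lam i)"
    by (simp add: sum_subtractf sum_distrib_left algebra_simps)
  show ?thesis using 1 2 3 4 5 by linarith
qed

lemma cs2: "cmod (x*y + z*w)^2 \<le> (cmod x^2 + cmod z^2) * (cmod y^2 + cmod w^2)"
proof -
  have "cmod (x*y + z*w) \<le> cmod x * cmod y + cmod z * cmod w"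
    by (metis norm_mult norm_triangle_ineq)
  hence "cmod (x*y + z*w)^2 \<le> (cmod x * cmod y + cmod z * cmod w)^2"
    by (simp add: power_mono)
  also have "\<dots> \<le> (cmod x^2 + cmod z^2) * (cmod y^2 + cmod w^2)"
  proof -
    have "0 \<le> (cmod x * cmod w - cmod z * cmod y)^2" by simp
    thus ?thesis by (simp add: power2_eq_square algebra_simps)
  qed
  finally show ?thesis .
qed

lemma G_entry:
  assumes R: "R \<in> carrier_mat n n" and D: "D \<in> carrier_mat n n" and dD: "diagonal_mat D"
    and p: "p < n" and q: "q < n"
  shows "(R * D * adj R) $$ (p,q) = (\<Sum>i<n. R $$ (p,i) * D $$ (i,i) * cnj (R $$ (q,i)))"
proof -
  have RD: "(R * D) $$ (p,l) = R $$ (p,l) * D $$ (l,l)" if l: "l < n" for l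
  proof -
    have "(R * D) $$ (p,l) = (\<Sum>i<n. R $$ (p,i) * D $$ (i,l))" by (rule mult_entry[OF R D p l])
    also have "\<dots> = (\<Sum>i<n. if i = l then R $$ (p,i) * D $$ (i,l) else 0)"
      using dD D l unfolding diagonal_mat_def by (intro sum.cong, auto)
    also have "\<dots> = R $$ (p,l) * D $$ (l,l)" using l by simp
    finally show ?thesis .
  qed
  have "(R * D * adj R) $$ (p,q) = (\<Sum>i<n. (R * D) $$ (p,i) * adj R $$ (i,q))"
    by (rule mult_entry[of _ n n _ n], use R D p q in auto)
  also have "\<dots> = (\<Sum>i<n. R $$ (p,i) * D $$ (i,i) * cnj (R $$ (q,i)))"
    using RD R q by (intro sum.cong, auto)
  finally show ?thesis .
qed



lemma sum_2d: "(\<Sum>p<2*d. f p) = (\<Sum>b<d. f b) + (\<Sum>b<d. f (d + b))" for d :: nat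
  by (subst sum_prod_index, simp add: numeral_2_eq_2 sum.lessThan_Suc)

lemma mult_cnj_sq: "z * cnj z = (complex_of_real (cmod z))^2" "cnj z * z = (complex_of_real (cmod z))^2"
  by (metis complex_norm_square of_real_power, metis complex_norm_square of_real_power mult.commute)

lemma upper_eig:
  assumes d: "d > 0" and R: "unitary_mat (2*d) R" and D: "D \<in> carrier_mat (2*d) (2*d)"
    and dD: "diagonal_mat D"
    and S: "S \<subseteq> {..<2*d}" "card S = d"
    and thr: "\<forall>i\<in>S. \<forall>j\<in>{..<2*d}-S. Re (D$$(j,j)) \<le> Re (D$$(i,i))"
    and ev: "eigenvalue (ptrace_A 2 d (R * D * adj R)) k"
  shows "Re k \<le> (\<Sum>i\<in>S. Re (D$$(i,i)))"
proof -
  define n where "n = 2 * d"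
  note Rd = unitaryD[OF R, folded n_def]
  have Dc: "D \<in> carrier_mat n n" using D n_def by simp
  define G where "G = R * D * adj R"
  define M where "M = ptrace_A 2 d G"
  define r where "r = (\<lambda>p i. R $$ (p,i))"
  define \<delta> where "\<delta> = (\<lambda>i. D $$ (i,i))"
  have Gq: "G $$ (p,q) = (\<Sum>i<n. r p i * \<delta> i * cnj (r q i))" if "p < n" "q < n" for p q
    unfolding G_def r_def \<delta>_def by (rule G_entry[OF Rd(1) Dc dD that])
  have Mc: "M \<in> carrier_mat 2 2" unfolding M_def ptrace_A_def by simp
  have bd: "b < n" "d + b < n" if "b < d" for b using that n_def by auto
  have M00: "M $$ (0,0) = (\<Sum>b<d. \<Sum>i<n. r b i * \<delta> i * cnj (r b i))"
    unfolding M_def ptrace_A_def by (auto intro!: sum.cong simp: Gq bd)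
  have M01: "M $$ (0,1) = (\<Sum>b<d. \<Sum>i<n. r b i * \<delta> i * cnj (r (d+b) i))"
    unfolding M_def ptrace_A_def by (auto intro!: sum.cong simp: Gq bd)
  have M10: "M $$ (1,0) = (\<Sum>b<d. \<Sum>i<n. r (d+b) i * \<delta> i * cnj (r b i))"
    unfolding M_def ptrace_A_def by (auto intro!: sum.cong simp: Gq bd)
  have M11: "M $$ (1,1) = (\<Sum>b<d. \<Sum>i<n. r (d+b) i * \<delta> i * cnj (r (d+b) i))"
    unfolding M_def ptrace_A_def by (auto intro!: sum.cong simp: Gq bd)
  obtain v where v: "v \<in> carrier_vec 2" "v \<noteq> 0\<^sub>v 2" "M *\<^sub>v v = k \<cdot>\<^sub>v v"
    using ev Mc unfolding M_def G_def eigenvalue_def eigenvector_def by auto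
  define v0 where "v0 = v$0"
  define v1 where "v1 = v$1"
  have mv: "(M *\<^sub>v v) $ a = M $$ (a,0) * v0 + M $$ (a,1) * v1" if "a < 2" for a
    using that v(1) Mc by (simp add: scalar_prod_def numeral_2_eq_2 v0_def v1_def)
  have ev0: "M $$ (0,0) * v0 + M $$ (0,1) * v1 = k * v0"
    using mv[of 0] v(3) v(1) by (simp add: v0_def)
  have ev1: "M $$ (1,0) * v0 + M $$ (1,1) * v1 = k * v1"
    using mv[of 1] v(3) v(1) by (simp add: v1_def)
  define N where "N = cmod v0 ^ 2 + cmod v1 ^ 2"
  have Npos: "N > 0"
  proof -
    have "v0 \<noteq> 0 \<or> v1 \<noteq> 0"
    proof (rule ccontr)
      assume "\<not> ?thesis"
      hence "v = 0\<^sub>v 2" using v(1) unfolding v0_def v1_def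
        by (intro eq_vecI, auto simp: numeral_2_eq_2 less_Suc_eq)
      thus False using v(2) by simp
    qed
    thus ?thesis unfolding N_def by (auto simp: add_pos_nonneg add_nonneg_pos)
  qed
  define z where "z = (\<lambda>i b. v0 * cnj (r b i) + v1 * cnj (r (d+b) i))"
  define w where "w = (\<lambda>i. \<Sum>b<d. cmod (z i b) ^ 2)"
  have LHS: "cnj v0 * (M $$ (0,0) * v0 + M $$ (0,1) * v1) + cnj v1 * (M $$ (1,0) * v0 + M $$ (1,1) * v1)
      = k * complex_of_real N"
    unfolding ev0 ev1 N_def by (simp add: mult_cnj_sq algebra_simps)
  have "cnj v0 * (M $$ (0,0) * v0 + M $$ (0,1) * v1) + cnj v1 * (M $$ (1,0) * v0 + M $$ (1,1) * v1)
     = (cnj v0 * v0) * M $$ (0,0) + (cnj v0 * v1) * M $$ (0,1) + (cnj v1 * v0) * M $$ (1,0) + (cnj v1 * v1) * M $$ (1,1)"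
    by (simp add: algebra_simps)
  also have "\<dots> = (\<Sum>b<d. \<Sum>i<n. (cnj v0 * v0) * (r b i * \<delta> i * cnj (r b i))
       + (cnj v0 * v1) * (r b i * \<delta> i * cnj (r (d+b) i))
       + (cnj v1 * v0) * (r (d+b) i * \<delta> i * cnj (r b i))
       + (cnj v1 * v1) * (r (d+b) i * \<delta> i * cnj (r (d+b) i)))"
    unfolding M00 M01 M10 M11 by (simp only: sum.distrib sum_distrib_left)
  also have "\<dots> = (\<Sum>b<d. \<Sum>i<n. \<delta> i * (cnj (z i b) * z i b))"
    unfolding z_def by (intro sum.cong refl, simp add: algebra_simps)
  also have "\<dots> = (\<Sum>i<n. \<delta> i * complex_of_real (w i))"
    unfolding w_def of_real_sum sum_distrib_left
    by (subst sum.swap, intro sum.cong refl, simp add: mult_cnj_sq)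
  finally have Q: "k * complex_of_real N = (\<Sum>i<n. \<delta> i * complex_of_real (w i))"
    using LHS by simp
  have ReQ: "Re k * N = (\<Sum>i<n. Re (\<delta> i) * w i)"
    using arg_cong[OF Q, of Re] by (simp add: Re_sum)
  have RR: "(\<Sum>i<n. r p i * cnj (r q i)) = (if p = q then 1 else 0)" if "p < n" "q < n" for p q
  proof -
    have "(R * adj R) $$ (p,q) = (\<Sum>i<n. r p i * cnj (r q i))"
      by (subst mult_entry[OF Rd(1) Rd(2) that], use that Rd in \<open>auto simp: r_def intro!: sum.cong\<close>)
    thus ?thesis using Rd(4) that by simp
  qed
  have col: "(\<Sum>p<n. cmod (r p i) ^ 2) = 1" if i: "i < n" for i
  proof -
    have "(adj R * R) $$ (i,i) = (\<Sum>p<n. r p i * cnj (r p i))"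
      by (subst mult_entry[OF Rd(2) Rd(1) i i], use i Rd in \<open>auto simp: r_def mult.commute intro!: sum.cong\<close>)
    hence "complex_of_real (\<Sum>p<n. cmod (r p i) ^ 2) = 1"
      using Rd(3) i unfolding cnj_sq_sum_real by simp
    thus ?thesis by (simp only: of_real_eq_1_iff)
  qed
  have w_le: "w i \<le> N" if i: "i < n" for i
  proof -
    have "w i \<le> (\<Sum>b<d. N * (cmod (r b i) ^ 2 + cmod (r (d+b) i) ^ 2))"
      unfolding w_def z_def N_def
      by (rule sum_mono, metis cs2 complex_mod_cnj)
    also have "\<dots> = N * (\<Sum>p<n. cmod (r p i) ^ 2)"
      unfolding n_def sum_2d by (simp only: sum_distrib_left[symmetric] sum.distrib)
    also have "\<dots> = N" using col[OF i] by simp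
    finally show ?thesis .
  qed
  have w_ge: "0 \<le> w i" for i unfolding w_def by (simp add: sum_nonneg)
  have "complex_of_real (\<Sum>i<n. w i) = (\<Sum>i<n. \<Sum>b<d. z i b * cnj (z i b))"
    unfolding w_def of_real_sum by (simp add: mult_cnj_sq)
  also have "\<dots> = (\<Sum>b<d. \<Sum>i<n. z i b * cnj (z i b))" by (rule sum.swap)
  also have "\<dots> = (\<Sum>b<d. complex_of_real N)"
  proof (rule sum.cong[OF refl])
    fix b assume "b \<in> {..<d}"
    hence b: "b < n" "d + b < n" "d + b \<noteq> b" using bd d by auto
    have "(\<Sum>i<n. z i b * cnj (z i b)) = (v0 * cnj v0) * (\<Sum>i<n. r b i * cnj (r b i))
      + (v0 * cnj v1) * (\<Sum>i<n. r (d+b) i * cnj (r b i))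
      + (v1 * cnj v0) * (\<Sum>i<n. r b i * cnj (r (d+b) i))
      + (v1 * cnj v1) * (\<Sum>i<n. r (d+b) i * cnj (r (d+b) i))"
      unfolding z_def sum_distrib_left sum.distrib[symmetric]
      by (intro sum.cong refl, simp add: algebra_simps)
    also have "\<dots> = v0 * cnj v0 + v1 * cnj v1"
      using b by (simp add: RR)
    also have "\<dots> = complex_of_real N" unfolding N_def by (simp add: mult_cnj_sq)
    finally show "(\<Sum>i<n. z i b * cnj (z i b)) = complex_of_real N" .
  qed
  also have "\<dots> = complex_of_real (real (card S) * N)" using S by simp
  finally have sw: "(\<Sum>i<n. w i) = real (card S) * N" by (simp only: of_real_eq_iff)
  have "(\<Sum>i\<in>{..<n}. Re (\<delta> i) * w i) \<le> N * (\<Sum>i\<in>S. Re (\<delta> i))"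
  proof (rule kyfan)
    show "S \<subseteq> {..<n}" using S n_def by simp
    show "S \<noteq> {}" using S d by auto
    show "\<forall>i\<in>{..<n}. 0 \<le> w i \<and> w i \<le> N" using w_le w_ge by auto
    show "(\<Sum>i\<in>{..<n}. w i) = real (card S) * N" using sw by simp
    show "\<forall>i\<in>S. \<forall>j\<in>{..<n} - S. Re (\<delta> j) \<le> Re (\<delta> i)" using thr n_def \<delta>_def by simp
  qed simp
  hence "N * Re k \<le> N * (\<Sum>i\<in>S. Re (\<delta> i))" using ReQ by (simp add: mult.commute)
  thus ?thesis using Npos unfolding \<delta>_def by simp
qed



lemma WP_entry:
  assumes W: "W \<in> carrier_mat n n" and s: "\<sigma> permutes {..<n}" and p: "p < n" and i: "i < n"
  shows "(W * perm_mat n \<sigma>) $$ (p,i) = W $$ (p, \<sigma> i)"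
proof -
  have si: "\<sigma> i < n" using permutes_in_image[OF s] i by simp
  have "(W * perm_mat n \<sigma>) $$ (p,i) = (\<Sum>k<n. W $$ (p,k) * (if k = \<sigma> i then 1 else 0))"
    by (subst mult_entry[OF W _ p i], auto simp: perm_mat_def i intro!: sum.cong)
  also have "\<dots> = W $$ (p, \<sigma> i)" by (rule sum_delta_r[OF si])
  finally show ?thesis .
qed

lemma perm_mat_carrier[simp]: "perm_mat n \<sigma> \<in> carrier_mat n n"
  by (simp add: perm_mat_def)

lemma lower_eig:
  assumes d: "d > 0" and VT: "unitary_mat 2 VT" and VA: "unitary_mat d VA"
    and t: "\<tau> permutes {..<2*d}" and D: "D \<in> carrier_mat (2*d) (2*d)" and dD: "diagonal_mat D"
  shows "eigenvalue (ptrace_A 2 d ((kron VT VA * perm_mat (2*d) (inv_into UNIV \<tau>)) * D * adj (kron VT VA * perm_mat (2*d) (inv_into UNIV \<tau>))))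
     (\<Sum>b<d. D $$ (\<tau> b, \<tau> b))"
proof -
  define n where "n = 2 * d"
  define W where "W = kron VT VA"
  define \<sigma> where "\<sigma> = inv_into UNIV \<tau>"
  have s: "\<sigma> permutes {..<n}" unfolding \<sigma>_def n_def by (rule permutes_inv[OF t])
  note VTd = unitaryD[OF VT] and VAd = unitaryD[OF VA]
  have Wc: "W \<in> carrier_mat n n" unfolding W_def n_def using VTd VAd by simp
  define R where "R = W * perm_mat n \<sigma>"
  have Rc: "R \<in> carrier_mat n n" unfolding R_def using Wc by simp
  have Dc: "D \<in> carrier_mat n n" using D n_def by simp
  define \<delta> where "\<delta> = (\<lambda>j. D $$ (\<tau> j, \<tau> j))"
  define \<Lambda> where "\<Lambda> = (\<lambda>c. \<Sum>e<d. \<delta> (c * d + e))"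
  define M where "M = ptrace_A 2 d (R * D * adj R)"
  have Wentry: "W $$ (a*d+b, c*d+e) = VT $$ (a,c) * VA $$ (b,e)"
    if "a < 2" "b < d" "c < 2" "e < d" for a b c e
  proof -
    have "a*d+b < 2*d" "c*d+e < 2*d" using that by (simp_all add: idx_lt)
    thus ?thesis using that VTd VAd unfolding W_def by (simp add: kron_entry)
  qed
  have Gq: "(R * D * adj R) $$ (p,q) = (\<Sum>j<n. W $$ (p,j) * \<delta> j * cnj (W $$ (q,j)))"
    if p: "p < n" and q: "q < n" for p q
  proof -
    have "(R * D * adj R) $$ (p,q) = (\<Sum>i<n. R $$ (p,i) * D $$ (i,i) * cnj (R $$ (q,i)))"
      by (rule G_entry[OF Rc Dc dD p q])
    also have "\<dots> = (\<Sum>i<n. W $$ (p,\<sigma> i) * D $$ (i,i) * cnj (W $$ (q,\<sigma> i)))"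
      unfolding R_def using WP_entry[OF Wc s] p q by (intro sum.cong, auto)
    also have "\<dots> = (\<Sum>j<n. W $$ (p,j) * \<delta> j * cnj (W $$ (q,j)))"
      unfolding \<delta>_def using sum.permute[OF t[folded n_def], of "\<lambda>i. W $$ (p,\<sigma> i) * D $$ (i,i) * cnj (W $$ (q,\<sigma> i))"]
      by (simp add: \<sigma>_def permutes_inverses[OF t])
    finally show ?thesis .
  qed
  have colA: "(\<Sum>b<d. VA $$ (b,e) * cnj (VA $$ (b,e))) = 1" if e: "e < d" for e
  proof -
    have "(adj VA * VA) $$ (e,e) = (\<Sum>b<d. VA $$ (b,e) * cnj (VA $$ (b,e)))"
      by (subst mult_entry[OF VAd(2) VAd(1) e e], use e VAd in \<open>auto simp: mult.commute intro!: sum.cong\<close>)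
    thus ?thesis using VAd(3) e by simp
  qed
  have Mentry: "M $$ (a,a') = (\<Sum>c<2. VT $$ (a,c) * \<Lambda> c * cnj (VT $$ (a',c)))"
    if a: "a < 2" and a': "a' < 2" for a a'
  proof -
    have "M $$ (a,a') = (\<Sum>b<d. (R * D * adj R) $$ (a*d+b, a'*d+b))"
      unfolding M_def ptrace_A_def using a a' by simp
    also have "\<dots> = (\<Sum>b<d. \<Sum>c<2. \<Sum>e<d. W $$ (a*d+b, c*d+e) * \<delta> (c*d+e) * cnj (W $$ (a'*d+b, c*d+e)))"
      using a a' unfolding n_def by (intro sum.cong refl, subst Gq, auto simp: idx_lt n_def sum_prod_index)
    also have "\<dots> = (\<Sum>b<d. \<Sum>c<2. \<Sum>e<d. (VT $$ (a,c) * \<delta> (c*d+e) * cnj (VT $$ (a',c))) * (VA $$ (b,e) * cnj (VA $$ (b,e))))"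
      using a a' by (intro sum.cong refl, simp add: Wentry)
    also have "\<dots> = (\<Sum>c<2. \<Sum>e<d. \<Sum>b<d. (VT $$ (a,c) * \<delta> (c*d+e) * cnj (VT $$ (a',c))) * (VA $$ (b,e) * cnj (VA $$ (b,e))))"
      by (subst sum.swap, rule sum.cong[OF refl], rule sum.swap)
    also have "\<dots> = (\<Sum>c<2. \<Sum>e<d. VT $$ (a,c) * \<delta> (c*d+e) * cnj (VT $$ (a',c)))"
      by (intro sum.cong refl, simp add: sum_distrib_left[symmetric] colA)
    also have "\<dots> = (\<Sum>c<2. VT $$ (a,c) * \<Lambda> c * cnj (VT $$ (a',c)))"
      unfolding \<Lambda>_def by (intro sum.cong refl, simp add: sum_distrib_left sum_distrib_right)
    finally show ?thesis .
  qed
  define x where "x = col VT 0"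
  have xc: "x \<in> carrier_vec 2" unfolding x_def using VTd(1) by (simp add: carrier_vecI)
  have VV: "(\<Sum>a<2. cnj (VT $$ (a,c)) * VT $$ (a,0)) = (if c = 0 then 1 else 0)" if c: "c < 2" for c
  proof -
    have "(adj VT * VT) $$ (c,0) = (\<Sum>a<2. cnj (VT $$ (a,c)) * VT $$ (a,0))"
      by (subst mult_entry[OF VTd(2) VTd(1) c], use c VTd in \<open>auto intro!: sum.cong\<close>)
    thus ?thesis using VTd(3) c by simp
  qed
  have Mc: "M \<in> carrier_mat 2 2" unfolding M_def ptrace_A_def by simp
  have Mx: "M *\<^sub>v x = \<Lambda> 0 \<cdot>\<^sub>v x"
  proof (rule eq_vecI)
    fix a assume "a < dim_vec (\<Lambda> 0 \<cdot>\<^sub>v x)"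
    hence a: "a < 2" using xc by simp
    have "(M *\<^sub>v x) $ a = (\<Sum>a'<2. M $$ (a,a') * VT $$ (a',0))"
      using a Mc xc VTd by (auto simp: scalar_prod_def x_def lessThan_atLeast0 intro!: sum.cong)
    also have "\<dots> = (\<Sum>a'<2. \<Sum>c<2. VT $$ (a,c) * \<Lambda> c * (cnj (VT $$ (a',c)) * VT $$ (a',0)))"
      using a by (intro sum.cong refl, simp add: Mentry sum_distrib_right, intro sum.cong refl, simp add: algebra_simps)
    also have "\<dots> = (\<Sum>c<2. VT $$ (a,c) * \<Lambda> c * (\<Sum>a'<2. cnj (VT $$ (a',c)) * VT $$ (a',0)))"
      by (subst sum.swap, simp add: sum_distrib_left)
    also have "\<dots> = (\<Sum>c<2. VT $$ (a,c) * \<Lambda> c * (if c = 0 then 1 else 0))"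
      by (intro sum.cong refl, simp add: VV)
    also have "\<dots> = \<Lambda> 0 * x $ a" using a VTd by (simp add: x_def sum_delta_r)
    finally show "(M *\<^sub>v x) $ a = (\<Lambda> 0 \<cdot>\<^sub>v x) $ a" using a xc by simp
  qed (use Mc xc in auto)
  have x0: "x \<noteq> 0\<^sub>v 2"
  proof
    assume "x = 0\<^sub>v 2"
    have "VT $$ (a,0) = 0" if "a < 2" for a
    proof -
      have "x $ a = 0" using \<open>x = 0\<^sub>v 2\<close> that by simp
      moreover have "x $ a = VT $$ (a,0)" using that VTd(1) by (simp add: x_def)
      ultimately show ?thesis by simp
    qed
    hence "(\<Sum>a<2. cnj (VT $$ (a,0)) * VT $$ (a,0)) = 0" by simp
    thus False using VV[of 0] by simp
  qed
  have "eigenvalue M (\<Lambda> 0)"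
    unfolding eigenvalue_def eigenvector_def using Mx x0 xc Mc by auto
  moreover have "\<Lambda> 0 = (\<Sum>b<d. D $$ (\<tau> b, \<tau> b))" unfolding \<Lambda>_def \<delta>_def by simp
  ultimately show ?thesis unfolding M_def R_def W_def \<sigma>_def n_def by simp
qed



lemma sandwich:
  assumes U: "U \<in> carrier_mat n n" and W: "W \<in> carrier_mat n n" and D: "D \<in> carrier_mat n n"
  shows "U * (W * D * adj W) * adj U = (U * W) * D * adj (U * W)"
proof -
  have aU: "adj U \<in> carrier_mat n n" and aW: "adj W \<in> carrier_mat n n" using U W by auto
  show ?thesis unfolding adj_mult[OF U W] using U W D aU aW
    by (subst assoc3[of _ n], auto)+
qed

lemma best_perm:
  fixes lam :: "nat \<Rightarrow> real"
  assumes n: "d \<le> n"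
  shows "\<exists>\<tau>. \<tau> permutes {..<n} \<and> (\<forall>i\<in>\<tau> ` {..<d}. \<forall>j\<in>{..<n} - \<tau> ` {..<d}. lam j \<le> lam i)"
proof -
  define F where "F = {p. p permutes {..<n}}"
  define f where "f = (\<lambda>p. \<Sum>b<d. lam (p b))"
  have finF: "finite F" unfolding F_def by (rule finite_permutations, simp)
  have "id \<in> F" unfolding F_def by simp
  hence neF: "F \<noteq> {}" by auto
  have "Max (f ` F) \<in> f ` F" using finF neF by (intro Max_in, auto)
  then obtain \<tau> where \<tau>F: "\<tau> \<in> F" and \<tau>max: "f \<tau> = Max (f ` F)" by auto
  have best: "f p \<le> f \<tau>" if "p \<in> F" for p using finF that \<tau>max by simp
  have t: "\<tau> permutes {..<n}" using \<tau>F F_def by simp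
  have inj: "inj \<tau>" using permutes_inj[OF t] .
  show ?thesis
  proof (intro exI conjI ballI)
    show "\<tau> permutes {..<n}" by fact
    fix i j assume i: "i \<in> \<tau> ` {..<d}" and j: "j \<in> {..<n} - \<tau> ` {..<d}"
    obtain b0 where b0: "b0 < d" "i = \<tau> b0" using i by auto
    have jn: "j < n" and jS: "\<forall>b<d. \<tau> b \<noteq> j" using j by auto
    have iin: "i \<in> {..<n}" using b0 n permutes_in_image[OF t, of b0] by auto
    define p where "p = Transposition.transpose i j \<circ> \<tau>"
    have pF: "p \<in> F" unfolding p_def F_def
      by (simp, rule permutes_compose[OF t permutes_swap_id], use iin jn in auto)
    have "f p = (\<Sum>b<d. lam (\<tau> b) + (if b = b0 then lam j - lam i else 0))"
      unfolding f_def p_def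
    proof (intro sum.cong refl)
      fix b assume b: "b \<in> {..<d}"
      show "lam ((Transposition.transpose i j \<circ> \<tau>) b) = lam (\<tau> b) + (if b = b0 then lam j - lam i else 0)"
      proof (cases "b = b0")
        case True thus ?thesis using b0 by simp
      next
        case False
        hence "\<tau> b \<noteq> i" using b0 inj by (auto dest: injD)
        moreover have "\<tau> b \<noteq> j" using jS b by auto
        ultimately show ?thesis using False by simp
      qed
    qed
    also have "\<dots> = f \<tau> + (lam j - lam i)" unfolding f_def sum.distrib using b0 by simp
    finally have "f p = f \<tau> + (lam j - lam i)" .
    thus "lam j \<le> lam i" using best[OF pF] by simp
  qed
qed



lemma lambda_max_props:
  assumes M: "M \<in> carrier_mat 2 2"
  shows "\<And>k. eigenvalue M k \<Longrightarrow> Re k \<le> lambda_max M"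
    and "(\<And>k. eigenvalue M k \<Longrightarrow> Re k \<le> T) \<Longrightarrow> lambda_max M \<le> T"
proof -
  have eq: "{Re k | k. eigenvalue M k} = Re ` spectrum M" by (auto simp: spectrum_def)
  have fin: "finite (Re ` spectrum M)" using card_finite_spectrum(1)[OF M] by simp
  have ne: "Re ` spectrum M \<noteq> {}" using spectrum_non_empty[OF M] by simp
  show "\<And>k. eigenvalue M k \<Longrightarrow> Re k \<le> lambda_max M"
    unfolding lambda_max_def eq using fin by (intro Max_ge, auto simp: spectrum_def)
  show "(\<And>k. eigenvalue M k \<Longrightarrow> Re k \<le> T) \<Longrightarrow> lambda_max M \<le> T"
    unfolding lambda_max_def eq using fin ne by (subst Max_le_iff, auto simp: spectrum_def)
qed

theorem lemma1:
  fixes d :: nat and \<rho>T \<rho>A :: "complex mat"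
  assumes "d \<ge> 2"
    and "density_mat 2 \<rho>T"
    and "density_mat d \<rho>A"
  shows "\<exists>VT VA \<sigma>. eigenbasis 2 \<rho>T VT \<and> eigenbasis d \<rho>A VA \<and> \<sigma> permutes {..<2*d} \<and>
           (\<forall>U. unitary_mat (2*d) U \<longrightarrow>
              lambda_max (purif_channel d U (kron \<rho>T \<rho>A))
                \<le> lambda_max (purif_channel d (perm_mat_wrt (kron VT VA) (2*d) \<sigma>) (kron \<rho>T \<rho>A)))"
proof -
  have d: "d > 0" using assms(1) by simp
  have T: "\<rho>T \<in> carrier_mat 2 2" "adj \<rho>T = \<rho>T" using assms(2) by (auto simp: density_mat_def)
  have A: "\<rho>A \<in> carrier_mat d d" "adj \<rho>A = \<rho>A" using assms(3) by (auto simp: density_mat_def)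
  obtain VT where VT: "unitary_mat 2 VT" "diagonal_mat (adj VT * \<rho>T * VT)" using spectral[OF T] by blast
  obtain VA where VA: "unitary_mat d VA" "diagonal_mat (adj VA * \<rho>A * VA)" using spectral[OF A] by blast
  note VTd = unitaryD[OF VT(1)] and VAd = unitaryD[OF VA(1)]
  define n where "n = 2 * d"
  define W where "W = kron VT VA"
  have Wu: "unitary_mat n W" unfolding W_def n_def by (rule kron_unitary[OF VT(1) VA(1)])
  note Wd = unitaryD[OF Wu]
  define \<rho> where "\<rho> = kron \<rho>T \<rho>A"
  have \<rho>c: "\<rho> \<in> carrier_mat n n" unfolding \<rho>_def n_def using T A by simp
  define D where "D = adj W * \<rho> * W"
  have Dc: "D \<in> carrier_mat n n" unfolding D_def using Wd \<rho>c by simp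
  have "D = kron (adj VT * \<rho>T * VT) (adj VA * \<rho>A * VA)"
    unfolding D_def W_def \<rho>_def adj_kron
    by (subst kron_mult[of _ 2 _ d], use VTd VAd T A in simp_all,
        subst kron_mult[of _ 2 _ d], use VTd VAd T A in simp_all)
  hence dD: "diagonal_mat D" using kron_diag[OF _ _ VT(2) VA(2), of 2 d] VTd VAd T A by simp
  have \<rho>eq: "\<rho> = W * D * adj W"
  proof -
    have "W * D * adj W = (W * adj W) * \<rho> * (W * adj W)"
      unfolding D_def using Wd \<rho>c by (subst assoc3[of _ n], auto)+
    thus ?thesis using Wd \<rho>c by simp
  qed
  define lam where "lam = (\<lambda>i. Re (D $$ (i,i)))"
  obtain \<tau> where t: "\<tau> permutes {..<n}"
    and thr: "\<forall>i\<in>\<tau> ` {..<d}. \<forall>j\<in>{..<n} - \<tau> ` {..<d}. lam j \<le> lam i"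
    using best_perm[of d n lam] n_def by auto
  define S where "S = \<tau> ` {..<d}"
  have injt: "inj \<tau>" using permutes_inj[OF t] .
  have S1: "S \<subseteq> {..<2*d}"
  proof
    fix x assume "x \<in> S"
    then obtain b where b: "b < d" "x = \<tau> b" unfolding S_def by auto
    have "b \<in> {..<n}" using b n_def by simp
    hence "\<tau> b \<in> {..<n}" using permutes_in_image[OF t, of b] by simp
    thus "x \<in> {..<2*d}" using b n_def by simp
  qed
  have S2: "card S = d" unfolding S_def
    by (subst card_image, rule inj_on_subset[OF injt], auto)
  note S = S1 S2
  define \<sigma> where "\<sigma> = inv_into UNIV \<tau>"
  have s: "\<sigma> permutes {..<2*d}" unfolding \<sigma>_def using permutes_inv[OF t] n_def by simp
  define P where "P = perm_mat n \<sigma>"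
  have Pc: "P \<in> carrier_mat n n" unfolding P_def by simp
  define U\<sigma> where "U\<sigma> = perm_mat_wrt W n \<sigma>"
  have U\<sigma>c: "U\<sigma> \<in> carrier_mat n n" unfolding U\<sigma>_def perm_mat_wrt_def using Wd by simp
  have U\<sigma>W: "U\<sigma> * W = W * P"
  proof -
    have "U\<sigma> * W = W * P * (adj W * W)"
      unfolding U\<sigma>_def perm_mat_wrt_def P_def[symmetric] using Wd Pc
      by (subst assoc3[of _ n], auto)+
    thus ?thesis using Wd Pc by simp
  qed
  have pcU: "purif_channel d U (kron \<rho>T \<rho>A) = ptrace_A 2 d ((U * W) * D * adj (U * W))"
    if "U \<in> carrier_mat n n" for U
    unfolding purif_channel_def \<rho>_def[symmetric] using sandwich[OF that Wd(1) Dc] \<rho>eq by simp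
  define Kb where "Kb = (\<Sum>b<d. D $$ (\<tau> b, \<tau> b))"
  have ReK: "Re Kb = (\<Sum>i\<in>S. lam i)"
    unfolding Kb_def S_def lam_def Re_sum by (subst sum.reindex, auto intro: inj_on_subset[OF injt])
  have low: "(\<Sum>i\<in>S. lam i) \<le> lambda_max (purif_channel d U\<sigma> (kron \<rho>T \<rho>A))"
  proof -
    have "eigenvalue (ptrace_A 2 d ((W * P) * D * adj (W * P))) Kb"
      unfolding Kb_def W_def P_def \<sigma>_def n_def
      by (rule lower_eig[OF d VT(1) VA(1) t[unfolded n_def] Dc[unfolded n_def] dD])
    hence "eigenvalue (purif_channel d U\<sigma> (kron \<rho>T \<rho>A)) Kb"
      using pcU[OF U\<sigma>c] U\<sigma>W by simp
    moreover have "purif_channel d U\<sigma> (kron \<rho>T \<rho>A) \<in> carrier_mat 2 2"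
      by (simp add: purif_channel_def ptrace_A_def)
    ultimately show ?thesis using lambda_max_props(1) ReK by fastforce
  qed
  show ?thesis
  proof (intro exI conjI allI impI)
    show "eigenbasis 2 \<rho>T VT" unfolding eigenbasis_def using VT by simp
    show "eigenbasis d \<rho>A VA" unfolding eigenbasis_def using VA by simp
    show "\<sigma> permutes {..<2*d}" by fact
    fix U assume U: "unitary_mat (2*d) U"
    have Uc: "U \<in> carrier_mat n n" using unitaryD[OF U] n_def by simp
    have Mc: "purif_channel d U (kron \<rho>T \<rho>A) \<in> carrier_mat 2 2"
      by (simp add: purif_channel_def ptrace_A_def)
    have "lambda_max (purif_channel d U (kron \<rho>T \<rho>A)) \<le> (\<Sum>i\<in>S. lam i)"
    proof (rule lambda_max_props(2)[OF Mc])
      fix k assume "eigenvalue (purif_channel d U (kron \<rho>T \<rho>A)) k"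
      hence ev: "eigenvalue (ptrace_A 2 d ((U * W) * D * adj (U * W))) k" using pcU[OF Uc] by simp
      have RU: "unitary_mat (2*d) (U * W)" using unitary_mult[OF U Wu[unfolded n_def]] .
      show "Re k \<le> (\<Sum>i\<in>S. lam i)" unfolding lam_def
        by (rule upper_eig[OF d RU Dc[unfolded n_def] dD S _ ev],
            use thr n_def in \<open>simp add: S_def lam_def\<close>)
    qed
    also have "\<dots> \<le> lambda_max (purif_channel d U\<sigma> (kron \<rho>T \<rho>A))" by (rule low)
    finally show "lambda_max (purif_channel d U (kron \<rho>T \<rho>A))
        \<le> lambda_max (purif_channel d (perm_mat_wrt (kron VT VA) (2*d) \<sigma>) (kron \<rho>T \<rho>A))"
      unfolding U\<sigma>_def W_def n_def .
  qed
qed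

end
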